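(* Let $p(L,M,D;\mu)$ be a generative reasoning model. For every finite $\Delta\subseteq L$, $[\![\Delta]\!]_p^{\max}\neq\emptyset$.
   Context: A generative reasoning model is given by the following data: - a multiset of data $\{d_1,\dots,d_K\}$ with $K\ge1$; - a propositional language $L$ over finitely many atoms, with set of models (truth assignments) $\mathcal M$; - a function $m:\{d_1,\dots,d_K\}\to\mathcal M$ assigning to each datum the model it supports. The induced probability of a model $n$ is $p(n)=|\{k:m(d_k)=n\}|/K$. Notation and definitions: - For $S\subseteq L$, $[\![S]\!]$ is the set of models satisfying every formula of $S$, and $[\![S]\!]_p=\{m\in[\![S]\!]:p(m)\neq0\}$. - A subset $S\subseteq\Delta$ is a maximal possible subset of $\Delta$ if $[\![S]\!]_p\neq\emptyset$ and $[\![S\cup\{\alpha\}]\!]_p=\emptyset$ for all $\alpha\in\Delta\setminus S$. - A cardinality-maximal possible subset is a maximal possible subset of maximum cardinality. - $MPS(\Delta)$ is the set of cardinality-maximal possible subsets of $\Delta$, and $[\![\Delta]\!]_p^{\max}=\bigcup_{S\in MPS(\Delta)}[\![S]\!]_p$. *)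

theory Defs
  imports Complex_Main "HOL-Library.Multiset"
begin

text \<open>Propositional formulas over atoms of type 'a; the language L is the set of all such formulas.\<close>
datatype 'a form =
    Atom 'a
  | Top
  | Bot
  | Neg "'a form"
  | Conj "'a form" "'a form"
  | Disj "'a form" "'a form"
  | Imp "'a form" "'a form"

type_synonym 'a model = "'a \<Rightarrow> bool"

fun sat :: "'a model \<Rightarrow> 'a form \<Rightarrow> bool" where
  "sat v (Atom x) = v x"
| "sat v Top = True"
| "sat v Bot = False"
| "sat v (Neg f) = (\<not> sat v f)"
| "sat v (Conj f g) = (sat v f \<and> sat v g)"
| "sat v (Disj f g) = (sat v f \<or> sat v g)"
| "sat v (Imp f g) = (sat v f \<longrightarrow> sat v g)"

text \<open>Generative reasoning model: a multiset of data D (K = size D) and a map m from data to models.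
  Induced probability p(n) = |{k. m(d_k) = n}| / K.\<close>
definition prob :: "'d multiset \<Rightarrow> ('d \<Rightarrow> 'a model) \<Rightarrow> 'a model \<Rightarrow> real" where
  "prob D m n = real (size (filter_mset (\<lambda>d. m d = n) D)) / real (size D)"

definition models :: "'a form set \<Rightarrow> 'a model set" where
  "models S = {v. \<forall>f\<in>S. sat v f}"

definition models_p :: "'d multiset \<Rightarrow> ('d \<Rightarrow> 'a model) \<Rightarrow> 'a form set \<Rightarrow> 'a model set" where
  "models_p D m S = {v \<in> models S. prob D m v \<noteq> 0}"

definition max_possible_subset ::
  "'d multiset \<Rightarrow> ('d \<Rightarrow> 'a model) \<Rightarrow> 'a form set \<Rightarrow> 'a form set \<Rightarrow> bool" where
  "max_possible_subset D m \<Delta> S \<longleftrightarrow>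
     S \<subseteq> \<Delta> \<and> models_p D m S \<noteq> {} \<and>
     (\<forall>\<alpha>\<in>\<Delta> - S. models_p D m (S \<union> {\<alpha>}) = {})"

definition MPS :: "'d multiset \<Rightarrow> ('d \<Rightarrow> 'a model) \<Rightarrow> 'a form set \<Rightarrow> 'a form set set" where
  "MPS D m \<Delta> = {S. max_possible_subset D m \<Delta> S \<and>
     (\<forall>S'. max_possible_subset D m \<Delta> S' \<longrightarrow> card S' \<le> card S)}"

definition models_p_max :: "'d multiset \<Rightarrow> ('d \<Rightarrow> 'a model) \<Rightarrow> 'a form set \<Rightarrow> 'a model set" where
  "models_p_max D m \<Delta> = (\<Union>S\<in>MPS D m \<Delta>. models_p D m S)"

end

theory Submission
  imports Defs
begin

theorem lemma2:
  fixes D :: "'d multiset" and m :: "'d \<Rightarrow> ('a::finite) model" and \<Delta> :: "'a form set"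
  assumes "size D \<ge> 1"
    and "finite \<Delta>"
  shows "models_p_max D m \<Delta> \<noteq> {}"
proof -
  obtain d where d: "d \<in># D" using assms(1)
    by (metis multiset_nonemptyE size_empty not_one_le_zero)
  have pos: "prob D m (m d) \<noteq> 0"
  proof -
    have "d \<in># filter_mset (\<lambda>e. m e = m d) D" using d by simp
    hence "size (filter_mset (\<lambda>e. m e = m d) D) \<noteq> 0" by (metis size_eq_0_iff_empty empty_iff set_mset_empty)
    moreover have "size D \<noteq> 0" using assms(1) by linarith
    ultimately show ?thesis unfolding prob_def by simp
  qed
  define P where "P = (\<lambda>S. S \<subseteq> \<Delta> \<and> models_p D m S \<noteq> {})"
  have P0: "P {}" unfolding P_def models_p_def models_def using pos by auto
  have bnd: "\<forall>y. P y \<longrightarrow> card y < card \<Delta> + 1"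
    using assms(2) unfolding P_def by (auto intro: card_mono le_imp_less_Suc)
  obtain S where S: "P S" and Smax: "\<forall>y. P y \<longrightarrow> card y \<le> card S"
    using ex_has_greatest_nat[OF P0 bnd] by blast
  have fS: "finite S" using S assms(2) unfolding P_def by (auto intro: finite_subset)
  have mps: "max_possible_subset D m \<Delta> S"
    unfolding max_possible_subset_def
  proof (intro conjI ballI)
    show "S \<subseteq> \<Delta>" "models_p D m S \<noteq> {}" using S unfolding P_def by auto
  next
    fix \<alpha> assume a: "\<alpha> \<in> \<Delta> - S"
    show "models_p D m (S \<union> {\<alpha>}) = {}"
    proof (rule ccontr)
      assume "models_p D m (S \<union> {\<alpha>}) \<noteq> {}"
      hence "P (S \<union> {\<alpha>})" using S a unfolding P_def by auto
      hence "card (S \<union> {\<alpha>}) \<le> card S" using Smax by blast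
      moreover have "card (S \<union> {\<alpha>}) = Suc (card S)" using fS a by simp
      ultimately show False by simp
    qed
  qed
  have "S \<in> MPS D m \<Delta>"
    unfolding MPS_def using mps Smax unfolding P_def max_possible_subset_def by auto
  moreover have "models_p D m S \<noteq> {}" using S unfolding P_def by auto
  ultimately show ?thesis unfolding models_p_max_def by blast
qed

end
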